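(* Let $G=(V,E)$ be a finite directed acyclic graph, $G'=(V,E')$ its minimum equivalent graph, $S$ a set of streams, and $f:V\to S$ a stream assignment. A synchronization plan $\Lambda\subseteq E$ is safe for $f$ on $G$ if and only if $\Lambda$ is safe for $f$ on $G'$.
   Context: A path from $u$ to $v$ in a directed graph is a nonempty sequence of edges $(u,w_1),\dots,(w_k,v)$ of that graph. The minimum equivalent graph (MEG) of a finite DAG $G=(V,E)$ is the subgraph $G'=(V,E')$, $E'\subseteq E$, with the same vertex set and the smallest number of edges among subgraphs having the same reachability relation as $G$. A stream assignment is any function $f:V\to S$. A synchronization plan is a set $\Lambda$ of edges. For a directed graph $H=(V,E_H)$ and a stream assignment $f$, a synchronization plan $\Lambda$ is safe for $f$ on $H$ if for every edge $(u,v)\in E_H$, either $f(u)=f(v)$, or there exists a path $P\subseteq E_H$ from $u$ to $v$ in $H$ with $P\cap\Lambda\neq\emptyset$. *)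

theory Defs
  imports Main
begin

definition finite_dag :: "'a set \<Rightarrow> ('a \<times> 'a) set \<Rightarrow> bool" where
  "finite_dag V E \<longleftrightarrow> finite V \<and> E \<subseteq> V \<times> V \<and> acyclic E"

inductive is_path :: "('a \<times> 'a) set \<Rightarrow> 'a \<Rightarrow> 'a \<Rightarrow> ('a \<times> 'a) list \<Rightarrow> bool"
  for H where
  single: "(u, v) \<in> H \<Longrightarrow> is_path H u v [(u, v)]"
| cons: "(u, w) \<in> H \<Longrightarrow> is_path H w v P \<Longrightarrow> is_path H u v ((u, w) # P)"

definition is_MEG :: "'a set \<Rightarrow> ('a \<times> 'a) set \<Rightarrow> ('a \<times> 'a) set \<Rightarrow> bool" where
  "is_MEG V E E' \<longleftrightarrow> E' \<subseteq> E \<and> E'\<^sup>+ = E\<^sup>+ \<and>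
     (\<forall>E''. E'' \<subseteq> E \<and> E''\<^sup>+ = E\<^sup>+ \<longrightarrow> card E' \<le> card E'')"

definition safe :: "('a \<times> 'a) set \<Rightarrow> ('a \<Rightarrow> 's) \<Rightarrow> ('a \<times> 'a) set \<Rightarrow> bool" where
  "safe H f \<Lambda> \<longleftrightarrow> (\<forall>(u, v) \<in> H. f u = f v \<or>
     (\<exists>P. is_path H u v P \<and> set P \<inter> \<Lambda> \<noteq> {}))"

end

theory Submission
  imports Defs
begin

lemma path_trancl: "is_path H u v P \<Longrightarrow> (u, v) \<in> H\<^sup>+ \<and> set P \<subseteq> H"
  by (induction rule: is_path.induct) auto

lemma path_app: "is_path H u w P \<Longrightarrow> is_path H w v Q \<Longrightarrow> is_path H u v (P @ Q)"
  by (induction rule: is_path.induct) (auto intro: is_path.intros)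

lemma trancl_path: "(u, v) \<in> H\<^sup>+ \<Longrightarrow> \<exists>P. is_path H u v P"
proof (induction rule: trancl_induct)
  case (base y) then show ?case by (blast intro: is_path.intros)
next
  case (step y z)
  then obtain P where "is_path H u y P" by blast
  then have "is_path H u z (P @ [(y,z)])" using step by (blast intro: path_app is_path.intros)
  then show ?case by blast
qed

lemma safe_edge:
  assumes "safe H f L" "(y,z) \<in> H" "f y \<noteq> f z"
  shows "\<exists>Q. is_path H y z Q \<and> set Q \<inter> L \<noteq> {}"
  using assms unfolding safe_def by auto

lemma safe_trancl:
  assumes "safe H f L"
  shows "(u, v) \<in> H\<^sup>+ \<Longrightarrow> f u \<noteq> f v \<longrightarrow> (\<exists>P. is_path H u v P \<and> set P \<inter> L \<noteq> {})"
proof (induction rule: trancl_induct)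
  case (base y) then show ?case using safe_edge[OF assms base] by blast
next
  case (step y z)
  show ?case
  proof
    assume ne: "f u \<noteq> f z"
    show "\<exists>P. is_path H u z P \<and> set P \<inter> L \<noteq> {}"
    proof (cases "f u = f y")
      case False
      then obtain P where P: "is_path H u y P" "set P \<inter> L \<noteq> {}" using step.IH by blast
      have "is_path H y z [(y,z)]" using step.hyps(2) by (rule is_path.single)
      then have "is_path H u z (P @ [(y,z)])" using P(1) by (simp add: path_app)
      moreover have "set (P @ [(y,z)]) \<inter> L \<noteq> {}" using P(2) by auto
      ultimately show ?thesis by (intro exI conjI)
    next
      case True
      then have "f y \<noteq> f z" using ne by simp
      then obtain Q where Q: "is_path H y z Q" "set Q \<inter> L \<noteq> {}"
        using safe_edge[OF assms step.hyps(2)] by blast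
      obtain P where "is_path H u y P" using trancl_path[OF step.hyps(1)] by blast
      then have "is_path H u z (P @ Q)" using Q(1) by (simp add: path_app)
      moreover have "set (P @ Q) \<inter> L \<noteq> {}" using Q(2) by auto
      ultimately show ?thesis by (intro exI conjI)
    qed
  qed
qed

lemma split_rtrancl:
  assumes "(a, b) \<in> H\<^sup>*"
  shows "(a, b) \<in> (H - {(u,v)})\<^sup>* \<or> ((a, u) \<in> (H - {(u,v)})\<^sup>* \<and> (v, b) \<in> (H - {(u,v)})\<^sup>*)"
  using assms
proof (induction rule: rtrancl_induct)
  case base then show ?case by simp
next
  case (step y z)
  show ?case
  proof (cases "(y,z) = (u,v)")
    case True then show ?thesis using step by auto
  next
    case False
    then have "(y,z) \<in> H - {(u,v)}" using step by simp
    then show ?thesis using step by (meson rtrancl.rtrancl_into_rtrancl)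
  qed
qed

lemma essential:
  assumes dag: "finite_dag V E" and meg: "is_MEG V E E'"
    and uv: "(u, v) \<in> E'" and P: "is_path E u v P"
  shows "P = [(u, v)]"
  using P
proof (cases rule: is_path.cases)
  case single then show ?thesis by simp
next
  case (cons w Q)
  define R where "R = E' - {(u,v)}"
  have acyc: "\<And>x. (x,x) \<notin> E\<^sup>+" using dag unfolding finite_dag_def acyclic_def by blast
  have sub: "E' \<subseteq> E" and cl: "E'\<^sup>+ = E\<^sup>+" using meg unfolding is_MEG_def by auto
  have uw: "(u,w) \<in> E\<^sup>+" using cons by auto
  have "is_path E w v Q" using cons by simp
  from path_trancl[OF this] have wv: "(w,v) \<in> E\<^sup>+" by simp
  have RE: "R\<^sup>* \<subseteq> E\<^sup>*" unfolding R_def using sub by (meson Diff_subset order_trans rtrancl_mono)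
  have 1: "(u,w) \<in> R\<^sup>*"
  proof -
    have "(u,w) \<in> E'\<^sup>*" using uw cl by (metis trancl_into_rtrancl)
    from split_rtrancl[OF this, of u v] show ?thesis
    proof
      assume "(u, w) \<in> (E' - {(u, v)})\<^sup>*" then show ?thesis unfolding R_def .
    next
      assume "(u, u) \<in> (E' - {(u, v)})\<^sup>* \<and> (v, w) \<in> (E' - {(u, v)})\<^sup>*"
      then have "(v,w) \<in> E\<^sup>*" using RE unfolding R_def by blast
      then have "(w,w) \<in> E\<^sup>+" using wv by auto
      then show ?thesis using acyc by blast
    qed
  qed
  have 2: "(w,v) \<in> R\<^sup>*"
  proof -
    have "(w,v) \<in> E'\<^sup>*" using wv cl by (metis trancl_into_rtrancl)
    from split_rtrancl[OF this, of u v] show ?thesis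
    proof
      assume "(w, v) \<in> (E' - {(u, v)})\<^sup>*" then show ?thesis unfolding R_def .
    next
      assume "(w, u) \<in> (E' - {(u, v)})\<^sup>* \<and> (v, v) \<in> (E' - {(u, v)})\<^sup>*"
      then have "(w,u) \<in> E\<^sup>*" using RE unfolding R_def by blast
      then have "(u,u) \<in> E\<^sup>+" using uw by auto
      then show ?thesis using acyc by blast
    qed
  qed
  have "u \<noteq> v" using uv sub acyc by blast
  then have "(u,v) \<in> R\<^sup>+" using 1 2 by (meson rtrancl_trans rtranclD)
  then have "E' \<subseteq> R\<^sup>+" unfolding R_def by auto
  then have "E'\<^sup>+ \<subseteq> (R\<^sup>+)\<^sup>+" by (rule trancl_mono_subset)
  then have "E'\<^sup>+ \<subseteq> R\<^sup>+" by simp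
  moreover have "R\<^sup>+ \<subseteq> E'\<^sup>+" unfolding R_def by (simp add: trancl_mono_subset)
  ultimately have "R\<^sup>+ = E\<^sup>+" using cl by blast
  moreover have "R \<subseteq> E" unfolding R_def using sub by blast
  ultimately have "card E' \<le> card R" using meg unfolding is_MEG_def by blast
  moreover have "finite E'" using dag sub unfolding finite_dag_def
    by (meson finite_SigmaI finite_subset)
  then have "card R < card E'" unfolding R_def using uv by (meson card_Diff1_less)
  ultimately show ?thesis by simp
qed

theorem lemma2:
  fixes V :: "'a set" and E E' \<Lambda> :: "('a \<times> 'a) set"
    and S :: "'s set" and f :: "'a \<Rightarrow> 's"
  assumes "finite_dag V E"
    and "is_MEG V E E'"
    and "\<forall>v\<in>V. f v \<in> S"
    and "\<Lambda> \<subseteq> E"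
  shows "safe E f \<Lambda> \<longleftrightarrow> safe E' f \<Lambda>"
proof
  assume s: "safe E f \<Lambda>"
  have sub: "E' \<subseteq> E" using assms(2) unfolding is_MEG_def by auto
  have "f u = f v \<or> (\<exists>P. is_path E' u v P \<and> set P \<inter> \<Lambda> \<noteq> {})" if uv: "(u,v) \<in> E'" for u v
  proof (cases "f u = f v")
    case True then show ?thesis by simp
  next
    case False then have ne: "f u \<noteq> f v" .
    have "(u,v) \<in> E" using uv sub by blast
    then have "f u = f v \<or> (\<exists>P. is_path E u v P \<and> set P \<inter> \<Lambda> \<noteq> {})"
      using s unfolding safe_def by fast
    then obtain P where P: "is_path E u v P" "set P \<inter> \<Lambda> \<noteq> {}" using ne by blast
    have "P = [(u,v)]" using essential[OF assms(1,2) uv P(1)] .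
    then have "is_path E' u v P" using uv by (simp add: is_path.single)
    then show ?thesis using P by blast
  qed
  then show "safe E' f \<Lambda>" unfolding safe_def by blast
next
  assume s: "safe E' f \<Lambda>"
  have sub: "E' \<subseteq> E" and cl: "E'\<^sup>+ = E\<^sup>+" using assms(2) unfolding is_MEG_def by auto
  have "f u = f v \<or> (\<exists>P. is_path E u v P \<and> set P \<inter> \<Lambda> \<noteq> {})" if uv: "(u,v) \<in> E" for u v
  proof (cases "f u = f v")
    case True then show ?thesis by simp
  next
    case False then have ne: "f u \<noteq> f v" .
    have "(u,v) \<in> E'\<^sup>+" using cl uv by auto
    then obtain P where P: "is_path E' u v P" "set P \<inter> \<Lambda> \<noteq> {}"
      using safe_trancl[OF s] ne by blast
    have "is_path E u v P"
      using P(1) sub by (induction rule: is_path.induct) (auto intro: is_path.intros)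
    then show ?thesis using P by blast
  qed
  then show "safe E f \<Lambda>" unfolding safe_def by blast
qed

end
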